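(* Let $1\le p<\infty$ and let $\boldsymbol{w(k)}=(w_n(k))_{n\in\mathbb{N}}$, $k\in\mathbb{N}$, be countably many weights such that each $B_{\boldsymbol{w(k)}}$ is a continuous frequently hypercyclic operator on the complex Banach space $\ell_p$. Assume that $\bigcap_{k\ge1}FHC(B_{\boldsymbol{w(k)}})\neq\emptyset$. Then for all $i,j\ge1$ with $i\ne j$ and for every $0<\varepsilon<1$, there exist increasing sequences $(m_{i,j,l})_{l\in\mathbb{N}}$, $(n_{i,j,l})_{l\in\mathbb{N}}$ of positive integers tending to infinity, with $\liminf_{l\to\infty}n_{i,j,l}/m_{i,j,l}>0$ and $\limsup_{l\to\infty}n_{i,j,l}/m_{i,j,l}<\varepsilon$, such that \[ \sum_{l\ge1}\frac{|W_{m_{i,j,l}}(i)|^p}{|W_{m_{i,j,l}}(j)|^p\,|W_{m_{i,j,l}-n_{i,j,l}}(i)|^p}<\infty . \]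
   Context: $\ell_p$ is the space of complex sequences $(x_n)_{n\ge0}$ with finite $\|x\|_p$, unit vectors $(e_n)_{n\ge0}$. A weight is a bounded sequence of nonzero complex numbers; $B_{\boldsymbol w}e_0=0$, $B_{\boldsymbol w}e_n=w_ne_{n-1}$. $W_n(k)=w_1(k)\cdots w_n(k)$, $W_0(k)=1$. $FHC(T)$ is the set of vectors $x$ such that for every nonempty open $U$, $\{n:T^nx\in U\}$ has positive lower density; $T$ is frequently hypercyclic if $FHC(T)\ne\emptyset$. *)

theory Defs
  imports "HOL-Analysis.Analysis" "HOL-Library.Liminf_Limsup"
begin

definition lp :: "real \<Rightarrow> (nat \<Rightarrow> complex) set" where
  "lp p = {x. summable (\<lambda>n. norm (x n) powr p)}"

definition lp_norm :: "real \<Rightarrow> (nat \<Rightarrow> complex) \<Rightarrow> real" where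
  "lp_norm p x = (\<Sum>n. norm (x n) powr p) powr (1 / p)"

definition lp_dist :: "real \<Rightarrow> (nat \<Rightarrow> complex) \<Rightarrow> (nat \<Rightarrow> complex) \<Rightarrow> real" where
  "lp_dist p x y = lp_norm p (\<lambda>n. x n - y n)"

definition lp_open :: "real \<Rightarrow> (nat \<Rightarrow> complex) set \<Rightarrow> bool" where
  "lp_open p U \<longleftrightarrow> U \<subseteq> lp p \<and>
     (\<forall>x\<in>U. \<exists>e>0. \<forall>y\<in>lp p. lp_dist p x y < e \<longrightarrow> y \<in> U)"

text \<open>A weight: bounded sequence of nonzero complex numbers (indices n >= 1 matter).\<close>
definition is_weight :: "(nat \<Rightarrow> complex) \<Rightarrow> bool" where
  "is_weight w \<longleftrightarrow> (\<forall>n\<ge>1. w n \<noteq> 0) \<and> (\<exists>C. \<forall>n\<ge>1. norm (w n) \<le> C)"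

text \<open>Weighted backward shift: B e_0 = 0, B e_n = w_n e_(n-1), i.e. (Bx)_n = w_(n+1) x_(n+1).\<close>
definition bshift :: "(nat \<Rightarrow> complex) \<Rightarrow> (nat \<Rightarrow> complex) \<Rightarrow> (nat \<Rightarrow> complex)" where
  "bshift w x = (\<lambda>n. w (Suc n) * x (Suc n))"

definition Wprod :: "(nat \<Rightarrow> complex) \<Rightarrow> nat \<Rightarrow> complex" where
  "Wprod w n = (\<Prod>i\<in>{1..n}. w i)"

definition lower_density :: "nat set \<Rightarrow> ereal" where
  "lower_density A = liminf (\<lambda>N. ereal (real (card (A \<inter> {..<N})) / real N))"

definition FHC :: "real \<Rightarrow> ((nat \<Rightarrow> complex) \<Rightarrow> (nat \<Rightarrow> complex)) \<Rightarrow> (nat \<Rightarrow> complex) set" where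
  "FHC p T = {x \<in> lp p. \<forall>U. lp_open p U \<and> U \<noteq> {} \<longrightarrow>
                 lower_density {n. (T ^^ n) x \<in> U} > 0}"

end

theory Submission imports Defs
begin
lemma Wprod_Suc: "Wprod w (Suc q) = Wprod w q * w (Suc q)"
  unfolding Wprod_def by (simp add: prod.nat_ivl_Suc')
lemma bshift_pow: "(bshift w ^^ n) x k * Wprod w k = Wprod w (k+n) * x (k+n)"
proof (induction n arbitrary: x)
  case 0 then show ?case by simp
next
  case (Suc n)
  have "(bshift w ^^ Suc n) x k = (bshift w ^^ n) (bshift w x) k" by (simp only: funpow_Suc_right comp_def)
  then have "(bshift w ^^ Suc n) x k * Wprod w k = Wprod w (k+n) * bshift w x (k+n)"
    using Suc[of "bshift w x"] by simp
  then show ?case by (simp add: bshift_def[of w x] Wprod_Suc mult_ac del: funpow.simps)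
qed

lemma dens:
  assumes "lower_density A > 0"
  shows "\<exists>\<delta>>0. \<exists>N0. \<forall>N\<ge>N0. \<delta> * real N < real (card (A \<inter> {..<N}))"
proof -
  from assms obtain d where d: "0 < ereal d" "ereal d < lower_density A"
    using ereal_dense2 by blast
  have "eventually (\<lambda>N. ereal d < ereal (real (card (A \<inter> {..<N})) / real N)) sequentially"
    using d(2) unfolding lower_density_def by (rule less_LiminfD)
  moreover have "eventually (\<lambda>N. N \<ge> (1::nat)) sequentially" by (rule eventually_ge_at_top)
  ultimately have "eventually (\<lambda>N. d * real N < real (card (A \<inter> {..<N}))) sequentially"
    by eventually_elim (auto simp: field_simps)
  then show ?thesis using d(1) unfolding eventually_sequentially by auto
qed

lemma interval:
  assumes "\<delta> * real N < real (card (A \<inter> {..<N}))" "real a \<le> \<delta> * real N"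
  shows "\<exists>m\<in>A. a \<le> m \<and> m < N"
proof (rule ccontr)
  assume "\<not> ?thesis"
  then have "A \<inter> {..<N} \<subseteq> {..<a}" by auto
  then have "card (A \<inter> {..<N}) \<le> a" using card_mono[of "{..<a}"] by fastforce
  then show False using assms by linarith
qed

lemma lp_zero: "(\<lambda>_. 0) \<in> lp p"
  unfolding lp_def by simp

lemma lp_e0: "(\<lambda>k. if k = 0 then 1 else 0) \<in> lp p"
proof -
  have "summable (\<lambda>n. norm (if n = 0 then 1 else 0 :: complex) powr p)"
    by (rule summable_finite[of "{0}"]) auto
  then show ?thesis unfolding lp_def by simp
qed

lemma pow_diff_bound:
  assumes "0 \<le> p"
  shows "norm (a - b :: complex) powr p \<le> 2 powr p * (norm a powr p + norm b powr p)"
proof -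
  have "norm (a - b) \<le> 2 * max (norm a) (norm b)" using norm_triangle_ineq4[of a b] by linarith
  then have "norm (a - b) powr p \<le> (2 * max (norm a) (norm b)) powr p"
    by (intro powr_mono2) (use assms in auto)
  also have "\<dots> = 2 powr p * max (norm a) (norm b) powr p" by (simp add: powr_mult)
  also have "max (norm a) (norm b) powr p \<le> norm a powr p + norm b powr p"
    by (cases "norm a \<le> norm b") (auto simp: max_def)
  finally show ?thesis by (simp add: mult_left_mono)
qed

lemma lp_diff_summable:
  assumes "0 \<le> p" "y \<in> lp p" "z \<in> lp p"
  shows "summable (\<lambda>n. norm (y n - z n) powr p)"
proof (rule summable_comparison_test[where g = "\<lambda>n. 2 powr p * (norm (y n) powr p + norm (z n) powr p)"])
  show "\<exists>N. \<forall>n\<ge>N. norm (norm (y n - z n) powr p) \<le> 2 powr p * (norm (y n) powr p + norm (z n) powr p)"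
    using pow_diff_bound[OF assms(1)] by auto
  show "summable (\<lambda>n. 2 powr p * (norm (y n) powr p + norm (z n) powr p))"
    using assms unfolding lp_def by (intro summable_mult summable_add) auto
qed

lemma coord_le_dist:
  assumes "0 < p" "y \<in> lp p" "z \<in> lp p"
  shows "norm (y k - z k) \<le> lp_dist p y z"
proof -
  let ?f = "\<lambda>n. norm (y n - z n) powr p"
  have s: "summable ?f" using lp_diff_summable assms by auto
  have "sum ?f {k} \<le> suminf ?f" by (rule sum_le_suminf[OF s]) auto
  then have le: "?f k \<le> suminf ?f" by simp
  have "norm (y k - z k) = (?f k) powr (1/p)" using assms(1) by (simp add: powr_powr)
  also have "\<dots> \<le> (suminf ?f) powr (1/p)" using le assms(1) by (intro powr_mono2) auto
  finally show ?thesis unfolding lp_dist_def lp_norm_def by simp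
qed

lemma open_small:
  assumes "0 < p" "0 < r"
  shows "lp_open p {y \<in> lp p. \<exists>s<r. \<forall>k. norm (y k) \<le> s}" (is "lp_open p ?U")
  unfolding lp_open_def
proof (intro conjI ballI)
  show "?U \<subseteq> lp p" by auto
  fix y assume "y \<in> ?U"
  then obtain s where y: "y \<in> lp p" "s < r" "\<forall>k. norm (y k) \<le> s" by auto
  show "\<exists>e>0. \<forall>z\<in>lp p. lp_dist p y z < e \<longrightarrow> z \<in> ?U"
  proof (intro exI[of _ "r - s"] conjI ballI impI)
    show "0 < r - s" using y by simp
    fix z assume z: "z \<in> lp p" "lp_dist p y z < r - s"
    have "\<forall>k. norm (z k) \<le> s + lp_dist p y z"
    proof
      fix k
      have "norm (z k) \<le> norm (y k) + norm (y k - z k)" using norm_triangle_ineq2[of "z k" "y k"]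
        by (simp add: norm_minus_commute)
      then show "norm (z k) \<le> s + lp_dist p y z"
        using coord_le_dist[OF assms(1) y(1) z(1), of k] y(3) by smt
    qed
    then show "z \<in> ?U" using z by (intro CollectI conjI exI[of _ "s + lp_dist p y z"]) auto
  qed
qed

lemma open_big:
  assumes "0 < p"
  shows "lp_open p {y \<in> lp p. 1/2 < norm (y 0)}" (is "lp_open p ?U")
  unfolding lp_open_def
proof (intro conjI ballI)
  show "?U \<subseteq> lp p" by auto
  fix y assume "y \<in> ?U"
  then have y: "y \<in> lp p" "1/2 < norm (y 0)" by auto
  show "\<exists>e>0. \<forall>z\<in>lp p. lp_dist p y z < e \<longrightarrow> z \<in> ?U"
  proof (intro exI[of _ "norm (y 0) - 1/2"] conjI ballI impI)
    show "0 < norm (y 0) - 1/2" using y by simp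
    fix z assume z: "z \<in> lp p" "lp_dist p y z < norm (y 0) - 1/2"
    have "norm (y 0) \<le> norm (z 0) + norm (y 0 - z 0)" using norm_triangle_ineq2[of "y 0" "z 0"] by simp
    then show "z \<in> ?U" using z coord_le_dist[OF assms(1) y(1) z(1), of 0] by auto
  qed
qed


lemma term_bound:
  fixes Ai Aj Ain X B Al r p :: real
  assumes "0 < p" "0 \<le> Ai" "0 \<le> Aj" "0 \<le> Ain" "0 \<le> X" "0 \<le> B"
    "B * Ain = Ai * X" "Al = Aj * X" "1/2 < Al" "B \<le> r"
  shows "Ai powr p / (Aj powr p * Ain powr p) \<le> (2 * r) powr p"
proof (cases "Ain = 0")
  case True
  have "0 \<le> (2 * r) powr p" by simp
  then show ?thesis using True assms(1) by simp
next
  case False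
  have X: "0 < X" using assms by (cases "X = 0") auto
  have Aj: "0 < Aj" using assms X by (cases "Aj = 0") auto
  have Ain: "0 < Ain" using False assms by simp
  have "Ai powr p / (Aj powr p * Ain powr p) = (Ai / (Aj * Ain)) powr p"
    using assms Aj Ain by (simp add: powr_divide powr_mult)
  also have "Ai / (Aj * Ain) = B / Al"
  proof -
    have "Ai / (Aj * Ain) = (Ai * X) / (Aj * X * Ain)" using X by simp
    also have "\<dots> = (B * Ain) / (Al * Ain)" using assms by (simp add: mult_ac)
    also have "\<dots> = B / Al" using Ain by simp
    finally show ?thesis .
  qed
  also have "(B / Al) powr p \<le> (2 * r) powr p"
  proof (rule powr_mono2)
    show "0 \<le> p" using assms by simp
    show "0 \<le> B / Al" using assms by simp
    have "B / Al \<le> B / (1/2)" using assms by (intro divide_left_mono) auto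
    then show "B / Al \<le> 2 * r" using assms by simp
  qed
  finally show ?thesis .
qed

theorem theorem4p10:
  fixes p :: real and w :: "nat \<Rightarrow> nat \<Rightarrow> complex"
  assumes p: "1 \<le> p"
    and weights: "\<And>k. k \<ge> 1 \<Longrightarrow> is_weight (w k)"
    and fhc: "\<And>k. k \<ge> 1 \<Longrightarrow> FHC p (bshift (w k)) \<noteq> {}"
    and common: "(\<Inter>k\<in>{1..}. FHC p (bshift (w k))) \<noteq> {}"
    and ij: "i \<ge> 1" "j \<ge> 1" "i \<noteq> j"
    and eps: "0 < \<epsilon>" "\<epsilon> < 1"
  shows "\<exists>m n :: nat \<Rightarrow> nat.
           strict_mono m \<and> strict_mono n \<and> (\<forall>l. 0 < m l \<and> 0 < n l \<and> n l \<le> m l) \<and>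
           filterlim m at_top sequentially \<and> filterlim n at_top sequentially \<and>
           liminf (\<lambda>l. ereal (real (n l) / real (m l))) > 0 \<and>
           limsup (\<lambda>l. ereal (real (n l) / real (m l))) < ereal \<epsilon> \<and>
           summable (\<lambda>l. norm (Wprod (w i) (m l)) powr p /
              (norm (Wprod (w j) (m l)) powr p * norm (Wprod (w i) (m l - n l)) powr p))"
proof -
  have p0: "0 < p" using p by simp
  from common obtain x where x: "\<And>k. k \<ge> 1 \<Longrightarrow> x \<in> FHC p (bshift (w k))" by auto
  define Bi where "Bi = bshift (w i)"
  define Bj where "Bj = bshift (w j)"
  have xi: "x \<in> FHC p Bi" using x ij unfolding Bi_def by auto
  have xj: "x \<in> FHC p Bj" using x ij unfolding Bj_def by auto
  define r :: "nat \<Rightarrow> real" where "r l = ((1/2)^l) powr (1/p)" for l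
  have r0: "0 < r l" for l unfolding r_def by simp
  have rp: "r l powr p = (1/2)^l" for l unfolding r_def using p0 by (simp add: powr_powr)
  define U where "U l = {y \<in> lp p. \<exists>s<r l. \<forall>k. norm (y k) \<le> s}" for l
  define V where "V = {y \<in> lp p. 1/2 < norm (y 0)}"
  define A where "A = {m. (Bj ^^ m) x \<in> V}"
  define D where "D l = {n. (Bi ^^ n) x \<in> U l}" for l
  have "(\<lambda>k. if k = 0 then 1 else 0) \<in> V" unfolding V_def using lp_e0 by simp
  then have "lower_density A > 0" using xj open_big[OF p0] unfolding A_def V_def FHC_def by blast
  then obtain \<delta> N0 where d0: "\<delta> > 0" and dA: "\<And>N. N \<ge> N0 \<Longrightarrow> \<delta> * real N < real (card (A \<inter> {..<N}))"
    using dens by blast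
  have unb: "\<exists>n\<in>D l. M \<le> n" for l M
  proof -
    have "(\<lambda>_. 0) \<in> U l" unfolding U_def using lp_zero r0[of l] by auto
    then have "lower_density (D l) > 0" using xi open_small[OF p0 r0[of l]] unfolding D_def U_def FHC_def by blast
    then obtain d' N' where d': "d' > 0" "\<And>N. N \<ge> N' \<Longrightarrow> d' * real N < real (card (D l \<inter> {..<N}))"
      using dens by blast
    define N where "N = max N' (nat \<lceil>M / d'\<rceil>)"
    have "real M / d' \<le> real N" unfolding N_def by linarith
    then have "real M \<le> d' * real N" using d' by (simp add: field_simps)
    then show ?thesis using interval[OF d'(2)[of N]] unfolding N_def by auto
  qed
  define K :: nat where "K = nat \<lceil>1/\<delta>\<rceil> + 1"
  have K1: "1 \<le> K" unfolding K_def by simp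
  have dK: "1 \<le> \<delta> * real K"
  proof -
    have "1/\<delta> \<le> real K" unfolding K_def by linarith
    then show ?thesis using d0 by (simp add: field_simps)
  qed
  define c where "c = \<epsilon> / (3 * real K)"
  have c0: "0 < c" unfolding c_def using eps K1 by simp
  define P where "P = (\<lambda>(l::nat, prev::nat) (nn::nat, mm::nat). prev < nn \<and> 0 < nn \<and> nn < mm \<and> nn \<in> D l \<and> mm \<in> A
      \<and> c \<le> real nn / real mm \<and> real nn / real mm \<le> \<epsilon> / 2)"
  have step: "\<exists>q. P lp q" for lp
  proof -
    obtain l prev where lp: "lp = (l, prev)" by (cases lp)
    obtain n where n: "n \<in> D l" "max (Suc prev) (max N0 1) \<le> n" using unb by blast
    have n1: "1 \<le> real n" using n by simp
    define a where "a = nat \<lceil>2 * real n / \<epsilon>\<rceil>"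
    have a1: "2 * real n / \<epsilon> \<le> real a" unfolding a_def by linarith
    have y0: "0 \<le> 2 * real n / \<epsilon>" using eps by simp
    have "real a = real_of_int \<lceil>2 * real n / \<epsilon>\<rceil>" unfolding a_def using y0 by simp
    then have a2: "real a < 2 * real n / \<epsilon> + 1" using ceiling_correct[of "2 * real n / \<epsilon>"] by linarith
    have "real n < 2 * real n / \<epsilon>" using eps n1 by (simp add: field_simps)
    then have na: "n < a" using a1 by linarith
    have "N0 \<le> n" using n by simp
    moreover have "a \<le> K * a" using K1 by simp
    ultimately have "N0 \<le> K * a" using na by linarith
    then have cardA: "\<delta> * real (K * a) < real (card (A \<inter> {..<K * a}))" using dA by blast
    have "real a * 1 \<le> real a * (\<delta> * real K)" by (rule mult_left_mono[OF dK]) simp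
    then have "real a \<le> \<delta> * real (K * a)" by (simp add: mult_ac)
    then obtain m where m: "m \<in> A" "a \<le> m" "m < K * a" using interval[OF cardA] by blast
    have m0: "0 < real m" using m na by simp
    have r1: "real n / real m \<le> \<epsilon> / 2"
    proof -
      have "real n / real m \<le> real n / real a" using m na by (intro divide_left_mono) auto
      also have "\<dots> \<le> real n / (2 * real n / \<epsilon>)" using a1 n1 eps na by (intro divide_left_mono) (auto simp: zero_less_mult_iff)
      also have "\<dots> = \<epsilon> / 2" using n1 eps by (simp add: field_simps)
      finally show ?thesis .
    qed
    have r2: "c \<le> real n / real m"
    proof -
      have "2 * real n / \<epsilon> + 1 \<le> 3 * real n / \<epsilon>"
        using n1 eps by (simp add: field_simps)
      then have "real a \<le> 3 * real n / \<epsilon>" using a2 by linarith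
      then have "real K * real a \<le> real K * (3 * real n / \<epsilon>)" by (rule mult_left_mono) simp
      moreover have "real m < real K * real a" using m(3) by (metis of_nat_less_iff of_nat_mult)
      ultimately have "real m \<le> real K * (3 * real n / \<epsilon>)" by linarith
      then have "real n / (real K * (3 * real n / \<epsilon>)) \<le> real n / real m"
        using m0 n1 K1 eps by (intro divide_left_mono) (auto simp: zero_less_mult_iff)
      moreover have "real n / (real K * (3 * real n / \<epsilon>)) = c"
        unfolding c_def using n1 eps K1 by (simp add: field_simps)
      ultimately show ?thesis by simp
    qed
    have "P lp (n, m)" unfolding P_def lp using n m na r1 r2 by auto
    then show ?thesis by blast
  qed
  obtain F where F: "\<And>lp. P lp (F lp)" using step by metis
  define s where "s = rec_nat (F (0, 0)) (\<lambda>l q. F (Suc l, snd q))"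
  define nn where "nn l = fst (s l)" for l
  define mm where "mm l = snd (s l)" for l
  have s0: "s 0 = F (0, 0)" and sS: "s (Suc l) = F (Suc l, mm l)" for l
    unfolding s_def mm_def by simp_all
  have P0: "P (0, 0) (nn 0, mm 0)" using F[of "(0,0)"] s0 unfolding nn_def mm_def by simp
  have PS: "P (Suc l, mm l) (nn (Suc l), mm (Suc l))" for l
    using F[of "(Suc l, mm l)"] sS[of l] unfolding nn_def mm_def by simp
  have Pl: "\<exists>prev. P (l, prev) (nn l, mm l)" for l
    using P0 PS by (cases l) auto
  have props: "0 < nn l \<and> nn l < mm l \<and> nn l \<in> D l \<and> mm l \<in> A
      \<and> c \<le> real (nn l) / real (mm l) \<and> real (nn l) / real (mm l) \<le> \<epsilon> / 2" for l
    using Pl[of l] unfolding P_def by auto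
  have incr: "mm l < nn (Suc l)" for l using PS[of l] unfolding P_def by auto
  have smm: "strict_mono mm"
    unfolding strict_mono_Suc_iff
  proof
    fix l show "mm l < mm (Suc l)" using incr[of l] props[of "Suc l"] by linarith
  qed
  have snn: "strict_mono nn"
    unfolding strict_mono_Suc_iff
  proof
    fix l show "nn l < nn (Suc l)" using incr[of l] props[of l] by linarith
  qed
  have bound: "norm (Wprod (w i) (mm l)) powr p /
              (norm (Wprod (w j) (mm l)) powr p * norm (Wprod (w i) (mm l - nn l)) powr p)
        \<le> 2 powr p * (1/2)^l" for l
  proof -
    let ?m = "mm l" and ?n = "nn l"
    have nm: "?n \<le> ?m" using props[of l] by simp
    from props[of l] have "?n \<in> D l" "?m \<in> A" by auto
    then obtain sv where sv: "sv < r l" "\<forall>k. norm ((Bi ^^ ?n) x k) \<le> sv"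
      and aV: "1/2 < norm ((Bj ^^ ?m) x 0)"
      unfolding D_def U_def A_def V_def by auto
    have e1: "(Bi ^^ ?n) x (?m - ?n) * Wprod (w i) (?m - ?n) = Wprod (w i) ?m * x ?m"
      using bshift_pow[of ?n "w i" x "?m - ?n"] nm unfolding Bi_def by simp
    have e2: "(Bj ^^ ?m) x 0 = Wprod (w j) ?m * x ?m"
      using bshift_pow[of ?m "w j" x 0] unfolding Bj_def by (simp add: Wprod_def)
    have "norm (Wprod (w i) (mm l)) powr p /
              (norm (Wprod (w j) (mm l)) powr p * norm (Wprod (w i) (mm l - nn l)) powr p)
       \<le> (2 * r l) powr p"
    proof (rule term_bound[where X = "norm (x ?m)" and B = "norm ((Bi ^^ ?n) x (?m - ?n))"
          and Al = "norm ((Bj ^^ ?m) x 0)"])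
      show "norm ((Bi ^^ ?n) x (?m - ?n)) * norm (Wprod (w i) (?m - ?n)) = norm (Wprod (w i) ?m) * norm (x ?m)"
        using arg_cong[OF e1, of norm] by (simp add: norm_mult)
      show "norm ((Bj ^^ ?m) x 0) = norm (Wprod (w j) ?m) * norm (x ?m)"
        using e2 by (simp add: norm_mult)
      show "norm ((Bi ^^ ?n) x (?m - ?n)) \<le> r l" using sv by (meson less_imp_le order_trans)
    qed (use p0 aV in auto)
    also have "\<dots> = 2 powr p * (1/2)^l" using r0[of l] by (simp add: powr_mult rp)
    finally show ?thesis .
  qed
  have summ: "summable (\<lambda>l. norm (Wprod (w i) (mm l)) powr p /
              (norm (Wprod (w j) (mm l)) powr p * norm (Wprod (w i) (mm l - nn l)) powr p))"
  proof (rule summable_comparison_test[where g = "\<lambda>l. 2 powr p * (1/2)^l"])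
    show "summable (\<lambda>l. 2 powr p * (1/2 :: real)^l)" by (intro summable_mult summable_geometric) simp
    show "\<exists>N. \<forall>l\<ge>N. norm (norm (Wprod (w i) (mm l)) powr p /
              (norm (Wprod (w j) (mm l)) powr p * norm (Wprod (w i) (mm l - nn l)) powr p))
              \<le> 2 powr p * (1/2)^l"
      using bound by simp
  qed
  have li: "ereal c \<le> liminf (\<lambda>l. ereal (real (nn l) / real (mm l)))"
    by (rule Liminf_bounded) (use props in simp)
  have ls: "limsup (\<lambda>l. ereal (real (nn l) / real (mm l))) \<le> ereal (\<epsilon> / 2)"
    by (rule Limsup_bounded) (use props in simp)
  have f1: "filterlim mm at_top sequentially" "filterlim nn at_top sequentially"
    using smm snn by (simp_all add: filterlim_subseq)
  have l1: "liminf (\<lambda>l. ereal (real (nn l) / real (mm l))) > 0" using li c0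
    by (meson ereal_less(2) less_le_trans)
  have l2: "limsup (\<lambda>l. ereal (real (nn l) / real (mm l))) < ereal \<epsilon>"
  proof -
    have "ereal (\<epsilon> / 2) < ereal \<epsilon>" using eps by simp
    then show ?thesis using ls by (rule le_less_trans[rotated])
  qed
  have pr: "\<forall>l. 0 < mm l \<and> 0 < nn l \<and> nn l \<le> mm l" using props by (meson less_imp_le less_trans)
  show ?thesis using smm snn pr f1 l1 l2 summ by blast
qed

end
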